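(* Let $d_{2,Q}(t,x)=x^4+2t^2x^2-8t^2x+t^4$, $d_{2,P+Q}(t,x)=x^4+2t^2x^2-8t^2x+t^4+t(4x^3-4t^2x+4t^2)$ and $g(t,x)=x^3-t^2x+t^2$. Then there are no integers $t_0>2$ and $x_0$ such that $d_{2,Q}(t_0,x_0)=0$, or $d_{2,P+Q}(t_0,x_0)=0$, or $g(t_0,x_0)=0$.
   Context: These are the $2$-division polynomials (after clearing denominators) of the points $Q=(0,t)$ and $P+Q$ (with $P=(t,t)$) and one quarter of $\psi_2^2$ on $E: y^2=x^3-t^2x+t^2$ over $\mathbb Q(t)$. *)

theory Defs
  imports Main
begin

definition d2Q :: "int \<Rightarrow> int \<Rightarrow> int" where
  "d2Q t x = x^4 + 2*t^2*x^2 - 8*t^2*x + t^4"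

definition d2PQ :: "int \<Rightarrow> int \<Rightarrow> int" where
  "d2PQ t x = x^4 + 2*t^2*x^2 - 8*t^2*x + t^4 + t*(4*x^3 - 4*t^2*x + 4*t^2)"

definition g :: "int \<Rightarrow> int \<Rightarrow> int" where
  "g t x = x^3 - t^2*x + t^2"

end

theory Submission
  imports Defs
begin

lemma Q_ok:
  fixes t x :: int assumes t: "t > 2" shows "d2Q t x \<noteq> 0"
proof -
  have e: "d2Q t x = (x^2+t^2)^2 - 8*t^2*x" unfolding d2Q_def by (simp add: algebra_simps power2_eq_square power4_eq_xxxx)
  have tt: "t^2 > 0" using t by simp
  have t9: "t*t \<ge> 3*3" using t by (intro mult_mono) auto
  consider "x \<le> 0" | "x = 1" | "x = 2" | "x \<ge> 3" by linarith
  then show ?thesis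
  proof cases
    case 1
    have "x^2+t^2 > 0" using tt by (simp add: add_nonneg_pos)
    hence "(x^2+t^2)^2 > 0" by simp
    moreover have "8*t^2*x \<le> 0" using 1 tt by (simp add: mult_nonneg_nonpos)
    ultimately show ?thesis using e by linarith
  next
    case 2
    have "t*t * (t*t) \<ge> 9 * (t*t)" using t9 by (intro mult_right_mono) auto
    hence "d2Q t x > 0" using e 2 t9 by (simp add: power2_eq_square algebra_simps)
    then show ?thesis by simp
  next
    case 3
    have "d2Q t x = (t^2 - 4)^2" using e 3 by (simp add: power2_eq_square algebra_simps)
    moreover have "t^2 \<noteq> 4" using t9 by (simp add: power2_eq_square)
    ultimately show ?thesis by simp
  next
    case 4
    have "(x^2+t^2)^2 - 4*x^2*t^2 = (x^2-t^2)^2" by (simp add: power2_eq_square algebra_simps)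
    moreover have "(x^2-t^2)^2 \<ge> 0" by simp
    ultimately have a: "(x^2+t^2)^2 \<ge> 4*x^2*t^2" by linarith
    have "x*x \<ge> 3*x" using 4 by (intro mult_right_mono) auto
    hence "(x*x)*(t*t) \<ge> (3*x)*(t*t)" using 4 by (intro mult_right_mono) auto
    hence "4*x^2*t^2 \<ge> 12*x*t^2" by (simp add: power2_eq_square algebra_simps)
    moreover have "4*x*t^2 > 0" using 4 tt by simp
    moreover have "8*t^2*x = 2*(4*x*t^2)" "12*x*t^2 = 3*(4*x*t^2)" by simp_all
    ultimately show ?thesis using a e by linarith
  qed
qed

lemma PQ_ok:
  fixes t x :: int assumes t: "t > 2" shows "d2PQ t x \<noteq> 0"
proof -
  define u where "u = 2*x - t"
  define S where "S = t^2 + 6*t*u + u^2"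
  have e: "16 * d2PQ t x = S^2 - 64*t^2*u"
    unfolding d2PQ_def S_def u_def by (simp add: algebra_simps power2_eq_square power4_eq_xxxx power3_eq_cube)
  have tt: "t^2 > 0" using t by simp
  show ?thesis
  proof (cases "u \<le> 0")
    case True
    show ?thesis
    proof
      assume z: "d2PQ t x = 0"
      have "64*t^2*u \<le> 0" using True tt by (simp add: mult_nonneg_nonpos)
      moreover have "S^2 \<ge> 0" by simp
      ultimately have "64*t^2*u = 0" using e z by linarith
      hence u0: "u = 0" using tt by simp
      hence "S = t^2" unfolding S_def by simp
      hence "S^2 > 0" using tt by simp
      thus False using e z u0 by simp
    qed
  next
    case False
    hence u: "u > 0" by simp
    have b: "6*t*u \<ge> 0" using u t by simp
    have c: "S \<ge> t^2 + 6*t*u" unfolding S_def by simp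
    have d: "0 \<le> t^2 + 6*t*u" using tt b by linarith
    have "(t^2 + 6*t*u)^2 \<le> S^2" using c d by (rule power_mono)
    moreover have "(t^2 + 6*t*u)^2 - 4*t^2*(6*t*u) = (t^2 - 6*t*u)^2" by (simp add: power2_eq_square algebra_simps)
    moreover have "(t^2 - 6*t*u)^2 \<ge> 0" by simp
    moreover have "4*t^2*(6*t*u) - 64*t^2*u = 8*(t^2*u)*(3*t-8)" by (simp add: power2_eq_square algebra_simps)
    moreover have "t^2*u > 0" using tt u by simp
    moreover hence "8*(t^2*u)*(3*t-8) > 0" using t by simp
    ultimately have "S^2 - 64*t^2*u > 0" by linarith
    then show ?thesis using e by simp
  qed
qed

lemma g_ok:
  fixes t x :: int assumes t: "t > 2" shows "g t x \<noteq> 0"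
proof -
  have e: "g t x = x*(x-t)*(x+t) + t^2" unfolding g_def by (simp add: algebra_simps power2_eq_square power3_eq_cube)
  have tt: "t^2 > 0" using t by simp
  consider "x < -t" | "-t \<le> x \<and> x \<le> 0" | "x = 1" | "2 \<le> x \<and> x < t" | "x \<ge> t" by linarith
  then show ?thesis
  proof cases
    case 1
    have a: "-x > t" using 1 by simp
    have b: "(-x-t)*(t-x) \<ge> 1*t" using 1 t by (intro mult_mono) auto
    have "(-x)*((-x-t)*(t-x)) > t*t" using a b t by (intro mult_less_le_imp_less) auto
    hence "g t x < 0" using e by (simp add: power2_eq_square algebra_simps)
    then show ?thesis by simp
  next
    case 2
    have "(-x)*(t-x) \<ge> 0" using 2 t by (intro mult_nonneg_nonneg) auto
    hence "(-x)*(t-x)*(x+t) \<ge> 0" using 2 by (intro mult_nonneg_nonneg) auto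
    moreover have "x*(x-t)*(x+t) = (-x)*(t-x)*(x+t)" by (simp add: algebra_simps)
    ultimately have "g t x > 0" using e tt by linarith
    then show ?thesis by simp
  next
    case 3
    have "g t x = 1" unfolding g_def using 3 by simp
    then show ?thesis by simp
  next
    case 4
    have k: "x*(t-x) = (t-1) + (x-1)*(t-x-1)" by (simp add: algebra_simps)
    have "(x-1)*(t-x-1) \<ge> 0" using 4 by simp
    hence a: "x*(t-x) \<ge> t-1" using k by linarith
    have "x*(t-x)*(x+t) \<ge> (t-1)*(t+2)" using a 4 t by (intro mult_mono) auto
    moreover have "(t-1)*(t+2) > t^2" using t by (simp add: power2_eq_square algebra_simps)
    ultimately have "g t x < 0" using e by (simp add: algebra_simps)
    then show ?thesis by simp
  next
    case 5
    have "x*(x-t)*(x+t) \<ge> 0" using 5 t by simp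
    hence "g t x > 0" using e tt by linarith
    then show ?thesis by simp
  qed
qed

theorem proposition4p2:
  "\<not> (\<exists>t0 x0 :: int. t0 > 2 \<and> (d2Q t0 x0 = 0 \<or> d2PQ t0 x0 = 0 \<or> g t0 x0 = 0))"
  using Q_ok PQ_ok g_ok by blast

end
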